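(* For every $n\ge 3$ and all elements $c_1,\dots,c_{n-1}$ of a commutative $\mathbb{Q}$-algebra, \[S_0(n)(c_1,\dots,c_{n-1})=\sum_{\substack{i_1+i_2=n-1\\ i_1,i_2\ge1}}c_{i_1}c_{i_2}.\]
   Context: Let $a_0,a_1,\dots$ be indeterminates and $a(x)=\sum_{i\ge0}a_ix^i$. For a positive integer $j$ set $G(x)=\prod_{i=0}^{j-1}\frac{1+a(x)x^2}{1+ix}$, $H(x)=\prod_{i=1-j}^{-1}\frac{1+ix}{1+a(x)x^2}$, $u=2j-1$, $v=j(j-1)$. For each $n\ge1$ there are unique polynomials $S_0(n),\dots,S_n(n)\in\mathbb{Q}[a_0,\dots,a_{n-2}]$, independent of $j$, such that for every positive integer $j$ the coefficient of $x^{n-1}$ in $\frac{G(x)-H(x)}{x^2}(1+a(x)x^2)$ equals $u\big(a_{n-1}+S_0(n)+\sum_{i=1}^nS_i(n)v^i\big)$. $S_i(n)(c_1,\dots,c_{n-1})$ denotes the result of substituting $a_k=c_{k+1}$ for $0\le k\le n-2$. *)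

theory Defs
  imports "HOL-Library.Poly_Mapping" "HOL-Computational_Algebra.Formal_Power_Series"
begin

text \<open>Multivariate polynomials over the rationals in the indeterminates a_0, a_1, ...,
  represented in the standard way as finitely supported maps from monomials
  (finitely supported exponent vectors) to rational coefficients.\<close>
type_synonym qpoly = "(nat \<Rightarrow>\<^sub>0 nat) \<Rightarrow>\<^sub>0 rat"

definition Var :: "nat \<Rightarrow> qpoly" where
  "Var k = Poly_Mapping.single (Poly_Mapping.single k 1) 1"

definition vars :: "qpoly \<Rightarrow> nat set" where
  "vars p = \<Union> (Poly_Mapping.keys ` Poly_Mapping.keys p)"

definition a_fps :: "qpoly fps" where
  "a_fps = Abs_fps Var"

definition G_fps :: "nat \<Rightarrow> qpoly fps" where
  "G_fps j = (\<Prod>i\<in>{0..<j}. (1 + a_fps * fps_X ^ 2) *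
               fps_right_inverse (1 + of_nat i * fps_X) 1)"

definition H_fps :: "nat \<Rightarrow> qpoly fps" where
  "H_fps j = (\<Prod>i\<in>{1 - int j..-1}. (1 + of_int i * fps_X) *
               fps_right_inverse (1 + a_fps * fps_X ^ 2) 1)"

text \<open>(G(x) - H(x))/x^2 * (1 + a(x) x^2); G - H is divisible by x^2, so dividing
  by x^2 is shifting by 2.\<close>
definition F_fps :: "nat \<Rightarrow> qpoly fps" where
  "F_fps j = fps_shift 2 (G_fps j - H_fps j) * (1 + a_fps * fps_X ^ 2)"

definition S_prop :: "nat \<Rightarrow> (nat \<Rightarrow> qpoly) \<Rightarrow> bool" where
  "S_prop n S \<longleftrightarrow>
     (\<forall>i>n. S i = 0) \<and>
     (\<forall>i\<le>n. vars (S i) \<subseteq> {..<n - 1}) \<and>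
     (\<forall>j::nat. j > 0 \<longrightarrow>
        fps_nth (F_fps j) (n - 1) =
          of_nat (2 * j - 1) *
            (Var (n - 1) + S 0 + (\<Sum>i = 1..n. S i * of_nat (j * (j - 1)) ^ i)))"

definition S :: "nat \<Rightarrow> nat \<Rightarrow> qpoly" where
  "S n = (THE T. S_prop n T)"

text \<open>Evaluation of p at a_k = c_(k+1), in a commutative ring with structure map
  phi from the rationals (a commutative Q-algebra).\<close>
definition eval_shift :: "(rat \<Rightarrow> 'a::comm_ring_1) \<Rightarrow> (nat \<Rightarrow> 'a) \<Rightarrow> qpoly \<Rightarrow> 'a" where
  "eval_shift \<phi> c p =
     (\<Sum>m\<in>Poly_Mapping.keys p. \<phi> (Poly_Mapping.lookup p m) *
        (\<Prod>k\<in>Poly_Mapping.keys m. c (k + 1) ^ Poly_Mapping.lookup m k))"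

end

theory Submission
  imports Defs "HOL-Computational_Algebra.Polynomial"
begin

unbundle fps_syntax


type_synonym mono = "nat \<Rightarrow>\<^sub>0 nat"

lemma lookup_single0_mult: "Poly_Mapping.lookup (Poly_Mapping.single 0 s * p) m = s * Poly_Mapping.lookup p m"
  by (simp add: mult_map_scale_conv_mult[symmetric] map.rep_eq when_def)

lemma lookup_mult_Sum_any:
  "Poly_Mapping.lookup (f * g) k = (\<Sum>(a, b). Poly_Mapping.lookup f a * Poly_Mapping.lookup g b when k = a + b)"
  by transfer (simp add: prod_fun_unfold_prod)

lemma mono_split_single:
  fixes a b :: mono
  assumes "a + b = Poly_Mapping.single i 1"
  shows "(a = 0 \<and> b = Poly_Mapping.single i 1) \<or> (a = Poly_Mapping.single i 1 \<and> b = 0)"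
proof -
  have h: "\<And>k. Poly_Mapping.lookup a k + Poly_Mapping.lookup b k = (1 when i = k)"
    using assms by (metis lookup_add lookup_single)
  have ak: "\<And>k. k \<noteq> i \<Longrightarrow> Poly_Mapping.lookup a k = 0 \<and> Poly_Mapping.lookup b k = 0"
    using h by (metis add_is_0 when_simps(2))
  have "Poly_Mapping.lookup a i + Poly_Mapping.lookup b i = 1" using h[of i] by simp
  then consider "Poly_Mapping.lookup a i = 0" "Poly_Mapping.lookup b i = 1"
    | "Poly_Mapping.lookup a i = 1" "Poly_Mapping.lookup b i = 0" by linarith
  then show ?thesis
  proof cases
    case 1
    have "a = 0" by (rule poly_mapping_eqI) (metis 1(1) ak lookup_zero)
    moreover have "b = Poly_Mapping.single i 1"
      by (rule poly_mapping_eqI) (metis 1(2) ak lookup_single_eq lookup_single_not_eq)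
    ultimately show ?thesis by simp
  next
    case 2
    have "b = 0" by (rule poly_mapping_eqI) (metis 2(2) ak lookup_zero)
    moreover have "a = Poly_Mapping.single i 1"
      by (rule poly_mapping_eqI) (metis 2(1) ak lookup_single_eq lookup_single_not_eq)
    ultimately show ?thesis by simp
  qed
qed

lemma lookup_mult_single1:
  fixes p q :: qpoly and i :: nat
  defines "\<mu> \<equiv> Poly_Mapping.single i 1 :: mono"
  shows "Poly_Mapping.lookup (p * q) \<mu> =
    Poly_Mapping.lookup p \<mu> * Poly_Mapping.lookup q 0 + Poly_Mapping.lookup p 0 * Poly_Mapping.lookup q \<mu>"
proof -
  have ne: "\<mu> \<noteq> 0" unfolding \<mu>_def by (metis lookup_single_eq lookup_zero one_neq_zero)
  let ?F = "\<lambda>(a, b). Poly_Mapping.lookup p a * Poly_Mapping.lookup q b when \<mu> = a + b"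
  have sub: "{x. ?F x \<noteq> 0} \<subseteq> {(0, \<mu>), (\<mu>, 0)}"
  proof
    fix x assume "x \<in> {x. ?F x \<noteq> 0}"
    then obtain a b where x: "x = (a,b)" "\<mu> = a + b"
      by (cases x) (auto simp: when_def split: if_splits)
    then show "x \<in> {(0, \<mu>), (\<mu>, 0)}"
      using mono_split_single[of a b i] unfolding \<mu>_def by auto
  qed
  have "Poly_Mapping.lookup (p * q) \<mu> = Sum_any ?F" by (rule lookup_mult_Sum_any)
  also have "\<dots> = sum ?F {(0, \<mu>), (\<mu>, 0)}"
    by (rule Sum_any.expand_superset) (use sub in auto)
  also have "\<dots> = ?F (0, \<mu>) + ?F (\<mu>, 0)" using ne by simp
  finally show ?thesis by (simp add: add.commute)
qed

definition mon :: "(nat \<Rightarrow> 'a::comm_ring_1) \<Rightarrow> mono \<Rightarrow> 'a" where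
  "mon c m = (\<Prod>k\<in>Poly_Mapping.keys m. c (k + 1) ^ Poly_Mapping.lookup m k)"

lemma mon_superset:
  assumes "finite K" "Poly_Mapping.keys m \<subseteq> K"
  shows "mon c m = (\<Prod>k\<in>K. c (k + 1) ^ Poly_Mapping.lookup m k)"
  unfolding mon_def
  by (rule prod.mono_neutral_left) (use assms in \<open>auto simp: in_keys_iff\<close>)

lemma mon_add: "mon c (m1 + m2) = mon c m1 * mon c m2"
proof -
  let ?K = "Poly_Mapping.keys m1 \<union> Poly_Mapping.keys m2"
  have "mon c (m1 + m2) = (\<Prod>k\<in>?K. c (k + 1) ^ Poly_Mapping.lookup (m1 + m2) k)"
    by (rule mon_superset) (auto simp: keys_add[of m1 m2])
  also have "\<dots> = (\<Prod>k\<in>?K. c (k + 1) ^ Poly_Mapping.lookup m1 k) * (\<Prod>k\<in>?K. c (k + 1) ^ Poly_Mapping.lookup m2 k)"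
    by (simp add: lookup_add power_add prod.distrib)
  also have "\<dots> = mon c m1 * mon c m2"
    by (subst (1 2) mon_superset[of ?K]) auto
  finally show ?thesis .
qed

lemma mon_single: "mon c (Poly_Mapping.single i (Suc 0)) = c (Suc i)"
  by (simp add: mon_def)

context
  fixes \<phi> :: "rat \<Rightarrow> 'a::comm_ring_1"
  assumes hom1: "\<phi> 1 = 1"
    and hom_add: "\<And>x y. \<phi> (x + y) = \<phi> x + \<phi> y"
begin

lemma hom0: "\<phi> 0 = 0"
  using hom_add[of 0 0] by simp

lemma eval_shift_superset:
  assumes "finite K" "Poly_Mapping.keys p \<subseteq> K"
  shows "eval_shift \<phi> c p = (\<Sum>m\<in>K. \<phi> (Poly_Mapping.lookup p m) * mon c m)"
  unfolding eval_shift_def mon_def[symmetric]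
  by (rule sum.mono_neutral_left) (use assms in \<open>auto simp: in_keys_iff hom0\<close>)

lemma eval_shift_add: "eval_shift \<phi> c (p + q) = eval_shift \<phi> c p + eval_shift \<phi> c q"
proof -
  let ?K = "Poly_Mapping.keys p \<union> Poly_Mapping.keys q"
  have "eval_shift \<phi> c (p + q) = (\<Sum>m\<in>?K. \<phi> (Poly_Mapping.lookup (p + q) m) * mon c m)"
    by (rule eval_shift_superset) (auto simp: keys_add[of p q])
  also have "\<dots> = (\<Sum>m\<in>?K. \<phi> (Poly_Mapping.lookup p m) * mon c m) + (\<Sum>m\<in>?K. \<phi> (Poly_Mapping.lookup q m) * mon c m)"
    by (simp add: lookup_add hom_add distrib_right sum.distrib)
  also have "\<dots> = eval_shift \<phi> c p + eval_shift \<phi> c q"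
    by (subst (1 2) eval_shift_superset[of ?K]) auto
  finally show ?thesis .
qed

lemma eval_shift_zero: "eval_shift \<phi> c 0 = 0"
  by (simp add: eval_shift_def)

lemma eval_shift_sum: "eval_shift \<phi> c (\<Sum>i\<in>I. f i) = (\<Sum>i\<in>I. eval_shift \<phi> c (f i))"
  by (induction I rule: infinite_finite_induct) (simp_all add: eval_shift_zero eval_shift_add)

lemma eval_shift_single: "eval_shift \<phi> c (Poly_Mapping.single m r) = \<phi> r * mon c m"
  by (cases "r = 0") (simp_all add: eval_shift_def mon_def hom0)

lemma eval_shift_VarVar: "eval_shift \<phi> c (Var i * Var k) = c (i + 1) * c (k + 1)"
  by (simp add: Var_def mult_single eval_shift_single hom1 mon_add mon_single)

end


abbreviation Afps :: "qpoly fps" where "Afps \<equiv> 1 + a_fps * fps_X ^ 2"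

lemma a_fps_nth[simp]: "a_fps $ k = Var k" by (simp add: a_fps_def)

lemma G1: "G_fps 1 = Afps"
  by (simp add: G_fps_def fps_lr_inverse_one_one)

lemma H1: "H_fps 1 = 1"
  by (simp add: H_fps_def)

lemma shift2_aX2: "fps_shift 2 (a_fps * fps_X ^ 2) = a_fps"
  by (rule fps_ext) (simp add: fps_X_power_mult_right_nth)

lemma F1: "F_fps 1 = a_fps + (a_fps * a_fps) * fps_X ^ 2"
proof -
  have "G_fps 1 - H_fps 1 = a_fps * fps_X^2" unfolding G1 H1 by simp
  then have "F_fps 1 = a_fps * Afps" unfolding F_fps_def by (simp only: shift2_aX2)
  then show ?thesis by (simp add: distrib_left mult.assoc)
qed

lemma F1_nth:
  assumes "n \<ge> 3"
  shows "F_fps 1 $ (n - 1) = Var (n - 1) + (\<Sum>i=0..n-3. Var i * Var (n - 3 - i))"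
proof -
  have "(a_fps * a_fps * fps_X ^ 2) $ (n - 1) = (a_fps * a_fps) $ (n - 3)"
    using assms by (simp add: fps_X_power_mult_right_nth numeral_3_eq_3)
  also have "\<dots> = (\<Sum>i=0..n-3. Var i * Var (n - 3 - i))"
    by (simp add: fps_mult_nth)
  finally show ?thesis unfolding F1 by simp
qed

lemma S_prop_S0:
  assumes "S_prop n T" "n \<ge> 3"
  shows "T 0 = (\<Sum>i=0..n-3. Var i * Var (n - 3 - i))"
proof -
  have h: "\<forall>j::nat. j > 0 \<longrightarrow>
        fps_nth (F_fps j) (n - 1) =
          of_nat (2 * j - 1) *
            (Var (n - 1) + T 0 + (\<Sum>i = 1..n. T i * of_nat (j * (j - 1)) ^ i))"
    using assms(1) unfolding S_prop_def by (elim conjE)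
  have "F_fps 1 $ (n - 1) = of_nat (2 * 1 - 1) *
            (Var (n - 1) + T 0 + (\<Sum>i = 1..n. T i * of_nat (1 * (1 - 1)) ^ i))"
    using h[rule_format, of 1] by (simp only: zero_less_one simp_thms)
  also have "(\<Sum>i = 1..n. T i * of_nat (1 * (1 - 1)) ^ i) = 0"
    by (rule sum.neutral) auto
  finally have "F_fps 1 $ (n - 1) = Var (n - 1) + T 0" by simp
  then have "Var (n - 1) + T 0 = Var (n - 1) + (\<Sum>i=0..n-3. Var i * Var (n - 3 - i))"
    using F1_nth[OF assms(2)] by (rule trans[OF sym])
  then show ?thesis by (rule add_left_imp_eq)
qed

theorem final_from_unique:
  fixes \<phi> :: "rat \<Rightarrow> 'a::comm_ring_1" and c :: "nat \<Rightarrow> 'a" and n :: nat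
  assumes hom1: "\<phi> 1 = 1"
    and hom_add: "\<And>x y. \<phi> (x + y) = \<phi> x + \<phi> y"
    and n: "n \<ge> 3"
    and ex: "\<exists>!T. S_prop n T"
  shows "eval_shift \<phi> c (S n 0) = (\<Sum>i1 = 1..n - 2. c i1 * c (n - 1 - i1))"
proof -
  have "S_prop n (S n)" unfolding S_def using ex by (rule theI')
  then have "S n 0 = (\<Sum>i=0..n-3. Var i * Var (n - 3 - i))" using S_prop_S0 n by blast
  then have "eval_shift \<phi> c (S n 0) = (\<Sum>i=0..n-3. c (i + 1) * c (n - 3 - i + 1))"
    by (simp add: eval_shift_sum[OF hom1 hom_add] eval_shift_VarVar[OF hom1 hom_add])
  also have "\<dots> = (\<Sum>i1 = 1..n - 2. c i1 * c (n - 1 - i1))"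
  proof -
    have "(\<Sum>i1 = 1..n - 2. c i1 * c (n - 1 - i1)) = (\<Sum>i=0..n-3. c (Suc i) * c (n - 1 - Suc i))"
    proof -
      obtain m where m: "n = m + 3" using n by (metis add.commute le_Suc_ex)
      have e1: "n - 2 = Suc m" "n - 3 = m" using m by simp_all
      show ?thesis unfolding e1 by (rule sum.reindex_cong[of Suc]) (auto simp: image_Suc_atLeastAtMost)
    qed
    also have "\<dots> = (\<Sum>i=0..n-3. c (i + 1) * c (n - 3 - i + 1))"
    proof (rule sum.cong)
      fix x assume "x \<in> {0..n-3}"
      then have "n - 1 - Suc x = n - 3 - x + 1" using n by auto
      then show "c (Suc x) * c (n - 1 - Suc x) = c (x + 1) * c (n - 3 - x + 1)" by simp
    qed simp
    finally show ?thesis by simp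
  qed
  finally show ?thesis .
qed


lemma qpoly_idom_test: "(x::qpoly) * y = 0 \<Longrightarrow> x = 0 \<or> y = 0" by simp

lemma lookup_mult_of_nat: "Poly_Mapping.lookup ((p::qpoly) * of_nat k) m = Poly_Mapping.lookup p m * of_nat k"
proof -
  have "Poly_Mapping.lookup (Poly_Mapping.single 0 (of_nat k) * p) m = of_nat k * Poly_Mapping.lookup p m"
    by (rule lookup_single0_mult)
  then show ?thesis by (simp only: single_of_nat mult.commute)
qed

lemma poly_vanish_coeffs:
  fixes D :: "nat \<Rightarrow> qpoly"
  assumes h: "\<And>j::nat. j > 0 \<Longrightarrow> (\<Sum>i\<le>n. D i * of_nat (j * (j - 1)) ^ i) = 0"
    and i: "i \<le> n"
  shows "D i = 0"
proof (rule poly_mapping_eqI)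
  fix \<mu>
  define P :: "rat poly" where "P = (\<Sum>i\<le>n. monom (Poly_Mapping.lookup (D i) \<mu>) i)"
  have roots: "poly P (of_nat (j * (j - 1))) = 0" if "j > 0" for j :: nat
  proof -
    have "poly P (of_nat (j * (j - 1))) = (\<Sum>i\<le>n. Poly_Mapping.lookup (D i) \<mu> * of_nat (j * (j - 1)) ^ i)"
      by (simp add: P_def poly_sum poly_monom)
    also have "\<dots> = Poly_Mapping.lookup (\<Sum>i\<le>n. D i * of_nat (j * (j - 1)) ^ i) \<mu>"
      by (simp only: lookup_sum lookup_mult_of_nat flip: of_nat_power)
    also have "\<dots> = 0" using h[OF that] by simp
    finally show ?thesis .
  qed
  have "P = 0"
  proof (rule ccontr)
    assume "P \<noteq> 0"
    then have fin: "finite {x. poly P x = 0}" by (rule poly_roots_finite)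
    have "(\<lambda>j::nat. (of_nat ((j + 1) * j) :: rat)) ` UNIV \<subseteq> {x. poly P x = 0}"
    proof clarify
      fix j :: nat
      have "poly P (of_nat ((j + 1) * (j + 1 - 1))) = 0" by (rule roots) simp
      then show "poly P (of_nat ((j + 1) * j)) = 0" by simp
    qed
    moreover have "inj (\<lambda>j::nat. (of_nat ((j + 1) * j) :: rat))"
    proof (rule injI)
      fix x y :: nat assume "(of_nat ((x + 1) * x) :: rat) = of_nat ((y + 1) * y)"
      then have e: "(x + 1) * x = (y + 1) * y" by (simp only: of_nat_eq_iff)
      show "x = y"
      proof (rule ccontr)
        assume "x \<noteq> y"
        then consider "x < y" | "y < x" by linarith
        then show False
        proof cases
          case 1 then have "(x + 1) * x < (y + 1) * y" by (intro mult_strict_mono) auto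
          then show False using e by simp
        next
          case 2 then have "(y + 1) * y < (x + 1) * x" by (intro mult_strict_mono) auto
          then show False using e by simp
        qed
      qed
    qed
    ultimately show False using fin by (meson finite_imageD finite_subset infinite_UNIV_nat)
  qed
  then have "coeff P i = 0" by simp
  moreover have "coeff P i = Poly_Mapping.lookup (D i) \<mu>"
    using i by (simp add: P_def coeff_sum coeff_monom)
  ultimately show "Poly_Mapping.lookup (D i) \<mu> = Poly_Mapping.lookup 0 \<mu>" by simp
qed

lemma S_prop_unique:
  assumes "S_prop n T1" "S_prop n T2"
  shows "T1 = T2"
proof
  fix i
  define D where "D i = T1 i - T2 i" for i
  have h: "(\<Sum>i\<le>n. D i * of_nat (j * (j - 1)) ^ i) = 0" if j: "j > 0" for j :: nat
  proof -
    let ?v = "of_nat (j * (j - 1)) :: qpoly"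
    have "of_nat (2 * j - 1) * (Var (n - 1) + T1 0 + (\<Sum>i = 1..n. T1 i * ?v ^ i)) =
          of_nat (2 * j - 1) * (Var (n - 1) + T2 0 + (\<Sum>i = 1..n. T2 i * ?v ^ i))"
    proof -
      have "\<forall>j::nat. j > 0 \<longrightarrow> fps_nth (F_fps j) (n - 1) = of_nat (2 * j - 1) *
            (Var (n - 1) + T1 0 + (\<Sum>i = 1..n. T1 i * of_nat (j * (j - 1)) ^ i))"
        using assms(1) unfolding S_prop_def by (elim conjE)
      moreover have "\<forall>j::nat. j > 0 \<longrightarrow> fps_nth (F_fps j) (n - 1) = of_nat (2 * j - 1) *
            (Var (n - 1) + T2 0 + (\<Sum>i = 1..n. T2 i * of_nat (j * (j - 1)) ^ i))"
        using assms(2) unfolding S_prop_def by (elim conjE)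
      ultimately show ?thesis using j by (elim allE[of _ j]) (simp only: simp_thms)
    qed
    moreover have nz: "(of_nat (2 * j - 1) :: qpoly) \<noteq> 0" using j by (simp only: of_nat_eq_0_iff)
    ultimately have "Var (n - 1) + T1 0 + (\<Sum>i = 1..n. T1 i * ?v ^ i) = Var (n - 1) + T2 0 + (\<Sum>i = 1..n. T2 i * ?v ^ i)"
      using mult_left_cancel[OF nz] by blast
    then have e: "T1 0 + (\<Sum>i = 1..n. T1 i * ?v ^ i) = T2 0 + (\<Sum>i = 1..n. T2 i * ?v ^ i)"
      by (simp only: add.assoc add_left_cancel)
    have s: "(\<Sum>i\<le>n. f i * ?v ^ i) = f 0 + (\<Sum>i = 1..n. f i * ?v ^ i)" for f :: "nat \<Rightarrow> qpoly"
      by (simp add: atMost_atLeast0 sum.atLeast_Suc_atMost[of 0 n, simplified])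
    have "(\<Sum>i\<le>n. D i * ?v ^ i) = (\<Sum>i\<le>n. T1 i * ?v ^ i) - (\<Sum>i\<le>n. T2 i * ?v ^ i)"
      by (simp add: D_def algebra_simps sum_subtractf)
    also have "\<dots> = 0" unfolding s using e by simp
    finally show ?thesis .
  qed
  show "T1 i = T2 i"
  proof (cases "i \<le> n")
    case True
    then have "D i = 0" by (intro poly_vanish_coeffs[OF h]) auto
    then show ?thesis by (simp add: D_def)
  next
    case False
    then show ?thesis using assms unfolding S_prop_def by simp
  qed
qed


definition PF :: "nat \<Rightarrow> (int \<Rightarrow> qpoly) \<Rightarrow> bool" where
  "PF d f \<longleftrightarrow> (\<exists>p. degree p \<le> d \<and> (\<forall>j. f j = poly p (of_int j)))"

lemma PF_const: "PF d (\<lambda>j. c)"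
  unfolding PF_def by (rule exI[of _ "[:c:]"]) simp

lemma PF_mono: "PF d f \<Longrightarrow> d \<le> d' \<Longrightarrow> PF d' f"
  unfolding PF_def by (meson order_trans)

lemma PF_add: "PF d f \<Longrightarrow> PF d g \<Longrightarrow> PF d (\<lambda>j. f j + g j)"
  unfolding PF_def
proof (elim exE conjE)
  fix p q assume "degree p \<le> d" "\<forall>j. f j = poly p (of_int j)" "degree q \<le> d" "\<forall>j. g j = poly q (of_int j)"
  then show "\<exists>r. degree r \<le> d \<and> (\<forall>j. f j + g j = poly r (of_int j))"
    by (intro exI[of _ "p + q"]) (auto intro: order_trans[OF degree_add_le])
qed

lemma PF_uminus: "PF d f \<Longrightarrow> PF d (\<lambda>j. - f j)"
  unfolding PF_def by (metis degree_minus poly_minus)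

lemma PF_diff: "PF d f \<Longrightarrow> PF d g \<Longrightarrow> PF d (\<lambda>j. f j - g j)"
  using PF_add[of d f "\<lambda>j. - g j"] PF_uminus[of d g] by simp

lemma PF_mult: "PF d1 f \<Longrightarrow> PF d2 g \<Longrightarrow> PF (d1 + d2) (\<lambda>j. f j * g j)"
  unfolding PF_def
proof (elim exE conjE)
  fix p q assume "degree p \<le> d1" "\<forall>j. f j = poly p (of_int j)" "degree q \<le> d2" "\<forall>j. g j = poly q (of_int j)"
  then show "\<exists>r. degree r \<le> d1 + d2 \<and> (\<forall>j. f j * g j = poly r (of_int j))"
    by (intro exI[of _ "p * q"]) (auto intro: order_trans[OF degree_mult_le])
qed

lemma PF_sum: "(\<And>i. i \<in> I \<Longrightarrow> PF d (f i)) \<Longrightarrow> PF d (\<lambda>j. \<Sum>i\<in>I. f i j)"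
proof (induction I rule: infinite_finite_induct)
  case (infinite A) then show ?case by (simp add: PF_const)
next
  case empty then show ?case by (simp add: PF_const)
next
  case (insert x F)
  then show ?case by (simp add: PF_add)
qed

lemma PF_id: "PF 1 (\<lambda>j. of_int j)"
  unfolding PF_def by (rule exI[of _ "[:0, 1:]"]) simp

lemma PF_comp_lin: "PF d f \<Longrightarrow> PF d (\<lambda>j. f (a + b * j))"
  unfolding PF_def
proof (elim exE conjE)
  fix p assume p: "degree p \<le> d" "\<forall>j. f j = poly p (of_int j)"
  let ?r = "pcompose p [:of_int a, of_int b:]"
  have "degree ?r \<le> d"
    using degree_pcompose_le[of p "[:of_int a, of_int b:]"] p(1)
  proof -
    have "degree [:of_int a, of_int b:] \<le> (1::nat)" by (simp add: degree_pCons_le)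
    then have "degree p * degree [:of_int a, of_int b:] \<le> d" using p(1)
      by (metis mult.right_neutral mult_le_mono order_trans)
    then show ?thesis by (rule order_trans[OF degree_pcompose_le])
  qed
  moreover have "\<forall>j. f (a + b * j) = poly ?r (of_int j)"
    using p(2) by (simp add: poly_pcompose algebra_simps)
  ultimately show "\<exists>r. degree r \<le> d \<and> (\<forall>j. f (a + b * j) = poly r (of_int j))" by blast
qed

definition qinv :: "nat \<Rightarrow> qpoly" where "qinv k = Poly_Mapping.single 0 (1 / of_nat k)"

lemma qinv_mult: "k > 0 \<Longrightarrow> qinv k * of_nat k = 1"
proof -
  assume k: "k > 0"
  have e: "(of_nat k :: qpoly) = Poly_Mapping.single 0 (of_nat k :: rat)" by simp
  have "qinv k * of_nat k = Poly_Mapping.single 0 (1 / of_nat k) * Poly_Mapping.single 0 (of_nat k)"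
    unfolding qinv_def by (subst e) (rule refl)
  also have "\<dots> = Poly_Mapping.single (0 + 0) (1 / of_nat k * of_nat k)" by (rule mult_single)
  also have "\<dots> = Poly_Mapping.single 0 1" using k by simp
  finally show ?thesis by simp
qed

lemma faulhaber_ex:
  "\<exists>P :: qpoly poly. degree P \<le> k + 1 \<and> (\<forall>x. poly P (x + 1) - poly P x = x ^ k)"
proof (induction k rule: less_induct)
  case (less k)
  have "\<forall>i. \<exists>P :: qpoly poly. i < k \<longrightarrow> degree P \<le> i + 1 \<and> (\<forall>x. poly P (x + 1) - poly P x = x ^ i)"
    using less by blast
  from choice[OF this] obtain Pf :: "nat \<Rightarrow> qpoly poly" where Pf0: "\<forall>i. i < k \<longrightarrow> degree (Pf i) \<le> i + 1 \<and> (\<forall>x. poly (Pf i) (x + 1) - poly (Pf i) x = x ^ i)"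
    by blast
  have Pf: "\<And>i. i < k \<Longrightarrow> degree (Pf i) \<le> i + 1 \<and> (\<forall>x. poly (Pf i) (x + 1) - poly (Pf i) x = x ^ i)"
    using Pf0 by blast
  define P where "P = smult (qinv (k + 1))
      (monom 1 (k + 1) - (\<Sum>i<k. smult (of_nat ((k + 1) choose i)) (Pf i)))"
  have "degree (\<Sum>i<k. smult (of_nat ((k + 1) choose i)) (Pf i)) \<le> k + 1"
  proof (rule degree_sum_le)
    fix i assume i: "i \<in> {..<k}"
    then have "degree (Pf i) \<le> i + 1" using Pf by blast
    then show "degree (smult (of_nat ((k + 1) choose i)) (Pf i)) \<le> k + 1"
      using i by (intro order_trans[OF degree_smult_le]) auto
  qed simp
  then have "degree P \<le> k + 1"
    unfolding P_def
    by (intro order_trans[OF degree_smult_le] degree_diff_le) (auto intro: order_trans[OF degree_monom_le])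
  moreover have "poly P (x + 1) - poly P x = x ^ k" for x
  proof -
    have bin: "(x + 1) ^ (k + 1) = (\<Sum>i\<le>k + 1. of_nat ((k + 1) choose i) * x ^ i)"
      unfolding binomial_ring[of x 1 "k + 1"] by (simp add: mult.commute)
    have split: "(\<Sum>i\<le>k + 1. of_nat ((k + 1) choose i) * x ^ i) =
        (\<Sum>i<k. of_nat ((k + 1) choose i) * x ^ i) + of_nat (k + 1) * x ^ k + x ^ (k + 1)"
      by (simp add: lessThan_Suc_atMost[symmetric] algebra_simps)
    have "poly P (x + 1) - poly P x = qinv (k + 1) * ((x + 1) ^ (k + 1) - x ^ (k + 1)
        - (\<Sum>i<k. of_nat ((k + 1) choose i) * (poly (Pf i) (x + 1) - poly (Pf i) x)))"
      by (simp add: P_def poly_sum poly_monom algebra_simps sum_subtractf)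
    also have "\<dots> = qinv (k + 1) * ((x + 1) ^ (k + 1) - x ^ (k + 1)
        - (\<Sum>i<k. of_nat ((k + 1) choose i) * x ^ i))"
      using Pf by simp
    also have "\<dots> = qinv (k + 1) * of_nat (k + 1) * x ^ k"
      unfolding bin split by (simp add: algebra_simps)
    also have "\<dots> = x ^ k" using qinv_mult[of "k + 1"] by simp
    finally show ?thesis .
  qed
  ultimately show ?case by blast
qed

lemma PF_const_step:
  fixes h :: "int \<Rightarrow> 'b"
  assumes "\<And>j. h (j + 1) = h j"
  shows "h j = h 0"
proof (induction j rule: int_induct[where k = 0])
  case base then show ?case by simp
next
  case (step1 i) then show ?case using assms[of i] by simp
next
  case (step2 i) then show ?case using assms[of "i - 1"] by simp
qed

lemma PF_antidiff:
  assumes g: "PF d g" and f: "\<And>j. f (j + 1) - f j = g j"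
  shows "PF (d + 1) f"
proof -
  obtain q where q: "degree q \<le> d" "\<And>j. g j = poly q (of_int j)" using g unfolding PF_def by blast
  have "\<forall>k. \<exists>P :: qpoly poly. degree P \<le> k + 1 \<and> (\<forall>x. poly P (x + 1) - poly P x = x ^ k)"
    using faulhaber_ex by blast
  from choice[OF this] obtain Pf :: "nat \<Rightarrow> qpoly poly" where Pf0: "\<forall>k. degree (Pf k) \<le> k + 1 \<and> (\<forall>x. poly (Pf k) (x + 1) - poly (Pf k) x = x ^ k)"
    by blast
  have Pf: "\<And>k. degree (Pf k) \<le> k + 1 \<and> (\<forall>x. poly (Pf k) (x + 1) - poly (Pf k) x = x ^ k)"
    using Pf0 by blast
  define F where "F = (\<Sum>k\<le>d. smult (coeff q k) (Pf k))"
  have degF: "degree F \<le> d + 1"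
    unfolding F_def
    by (rule degree_sum_le) (use Pf in \<open>auto intro: order_trans[OF degree_smult_le] order_trans\<close>)
  have DF: "poly F (x + 1) - poly F x = poly q x" for x
  proof -
    have "poly F (x + 1) - poly F x = (\<Sum>k\<le>d. coeff q k * (poly (Pf k) (x + 1) - poly (Pf k) x))"
      by (simp add: F_def poly_sum algebra_simps sum_subtractf)
    also have "\<dots> = (\<Sum>k\<le>d. coeff q k * x ^ k)" using Pf by simp
    also have "\<dots> = poly q x"
      by (simp add: poly_altdef) (rule sum.mono_neutral_right, use q(1) in \<open>auto simp: coeff_eq_0\<close>)
    finally show ?thesis .
  qed
  define h where "h j = f j - poly F (of_int j)" for j
  have "h (j + 1) = h j" for j
  proof -
    have "h (j + 1) - h j = (f (j + 1) - f j) - (poly F (of_int j + 1) - poly F (of_int j))"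
      by (simp add: h_def algebra_simps)
    also have "\<dots> = 0" using f[of j] DF[of "of_int j"] q(2)[of j] by simp
    finally show ?thesis by simp
  qed
  then have hc: "\<And>j. h j = h 0" by (rule PF_const_step)
  show ?thesis unfolding PF_def
  proof (intro exI conjI allI)
    show "degree (F + [:h 0:]) \<le> d + 1"
      using degF by (intro order_trans[OF degree_add_le]) auto
    fix j
    show "f j = poly (F + [:h 0:]) (of_int j)"
    proof -
      have "f j - poly F (of_int j) = f 0 - poly F (of_int 0)" using hc[of j] by (simp only: h_def)
      then show ?thesis by (simp add: algebra_simps h_def)
    qed
  qed
qed


definition Ainv :: "qpoly fps" where "Ainv = fps_right_inverse Afps 1"

lemma Afps_Ainv: "Afps * Ainv = 1" unfolding Ainv_def by (rule fps_right_inverse) simp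
lemma Ainv_Afps: "Ainv * Afps = 1" by (subst mult.commute) (rule Afps_Ainv)
lemma Ainv_nth0: "Ainv $ 0 = 1" unfolding Ainv_def by simp

definition Apow :: "int \<Rightarrow> qpoly fps" where
  "Apow j = (if 0 \<le> j then Afps ^ nat j else Ainv ^ nat (- j))"

lemma Apow_0: "Apow 0 = 1" by (simp add: Apow_def)

lemma Apow_succ: "Apow (j + 1) = Apow j * Afps"
proof (cases "0 \<le> j")
  case True
  then have "nat (j + 1) = Suc (nat j)" by simp
  then show ?thesis using True by (simp add: Apow_def mult.commute)
next
  case False
  define m where "m = nat (- (j + 1))"
  have m: "nat (- j) = Suc m" using False by (simp add: m_def)
  have "Apow j = Ainv ^ m * Ainv" using False m by (simp add: Apow_def mult.commute)
  then have "Apow j * Afps = Ainv ^ m" by (simp add: mult.assoc Ainv_Afps)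
  moreover have "Apow (j + 1) = Ainv ^ m"
    using False by (cases "j + 1 = 0") (auto simp: Apow_def m_def)
  ultimately show ?thesis by simp
qed

definition Lfps :: "int \<Rightarrow> qpoly fps" where "Lfps i = 1 + of_int i * fps_X"
definition Linv :: "int \<Rightarrow> qpoly fps" where "Linv i = fps_right_inverse (Lfps i) 1"

lemma Lfps_nth0: "Lfps i $ 0 = 1" by (simp add: Lfps_def)
lemma Lfps_Linv: "Lfps i * Linv i = 1" unfolding Linv_def by (rule fps_right_inverse) (simp add: Lfps_nth0)
lemma Linv_Lfps: "Linv i * Lfps i = 1" by (subst mult.commute) (rule Lfps_Linv)

definition Qf :: "int \<Rightarrow> qpoly fps" where
  "Qf j = (if 0 \<le> j then (\<Prod>i\<in>{0..<nat j}. Linv (int i)) else (\<Prod>i\<in>{j..-1}. Lfps i))"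

lemma Qf_0: "Qf 0 = 1" by (simp add: Qf_def)

lemma Qf_rec: "Qf j = Qf (j + 1) * Lfps j"
proof (cases "0 \<le> j")
  case True
  then have "nat (j + 1) = Suc (nat j)" by simp
  then have "Qf (j + 1) = Qf j * Linv j" using True by (simp add: Qf_def)
  then show ?thesis by (simp add: mult.assoc Linv_Lfps)
next
  case False
  show ?thesis
  proof (cases "j = -1")
    case True then show ?thesis by (simp add: Qf_def)
  next
    case False2: False
    have "{j..-1} = insert j {j + 1..-1}" using False False2 by auto
    then have "Qf j = Lfps j * (\<Prod>i\<in>{j + 1..-1}. Lfps i)" using False by (simp add: Qf_def)
    moreover have "Qf (j + 1) = (\<Prod>i\<in>{j + 1..-1}. Lfps i)" using False False2 by (simp add: Qf_def)
    ultimately show ?thesis by (simp add: mult.commute)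
  qed
qed

lemma Apow_nth0: "Apow j $ 0 = 1"
  by (simp add: Apow_def fps_nth_power_0 Ainv_nth0)

lemma Qf_nth0: "Qf j $ 0 = 1"
proof -
  have "Qf (j + 1) $ 0 = Qf j $ 0" for j
    by (subst (2) Qf_rec) (simp add: Lfps_nth0)
  then have "Qf j $ 0 = Qf 0 $ 0" by (rule PF_const_step)
  then show ?thesis by (simp add: Qf_0)
qed

definition Gp :: "int \<Rightarrow> qpoly fps" where "Gp j = Apow j * Qf j"

abbreviation aX2 :: "qpoly fps" where "aX2 \<equiv> a_fps * fps_X ^ 2"

lemma Apow_diff: "Apow (j + 1) $ m - Apow j $ m = (\<Sum>i=0..m. Apow j $ i * aX2 $ (m - i))"
  by (simp add: Apow_succ distrib_left fps_mult_nth)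

lemma PF_Apow: "PF (2 * m) (\<lambda>j. Apow j $ m)"
proof (induction m rule: less_induct)
  case (less m)
  show ?case
  proof (cases "m = 0")
    case True then show ?thesis by (simp add: Apow_nth0 PF_const)
  next
    case False
    have g: "PF (2 * m - 1) (\<lambda>j. \<Sum>i=0..m. Apow j $ i * aX2 $ (m - i))"
    proof (rule PF_sum)
      fix i assume i: "i \<in> {0..m}"
      show "PF (2 * m - 1) (\<lambda>j. Apow j $ i * aX2 $ (m - i))"
      proof (cases "i = m")
        case True
        then show ?thesis by (simp add: fps_X_power_mult_right_nth PF_const)
      next
        case False
        then have "i < m" using i by simp
        then have "PF (2 * i + 0) (\<lambda>j. Apow j $ i * aX2 $ (m - i))"
          using less by (intro PF_mult PF_const) auto
        then show ?thesis by (rule PF_mono) (use \<open>i < m\<close> in simp)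
      qed
    qed
    have "PF (2 * m - 1 + 1) (\<lambda>j. Apow j $ m)"
      by (rule PF_antidiff[OF g]) (rule Apow_diff)
    then show ?thesis using False by simp
  qed
qed

lemma Qf_nth_rec: "Qf j $ Suc m = Qf (j + 1) $ Suc m + of_int j * Qf (j + 1) $ m"
proof -
  have "Qf j = Qf (j + 1) + fps_const (of_int j) * (fps_X * Qf (j + 1))"
    by (subst Qf_rec) (simp add: Lfps_def distrib_left fps_of_int mult.commute mult.left_commute)
  then show ?thesis by simp
qed

lemma PF_Qf: "PF (2 * m) (\<lambda>j. Qf j $ m)"
proof (induction m)
  case 0 then show ?case by (simp add: Qf_nth0 PF_const)
next
  case (Suc m)
  have sh: "PF (2 * m) (\<lambda>j. Qf (1 + 1 * j) $ m)" using Suc by (rule PF_comp_lin)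
  have "PF (1 + 2 * m) (\<lambda>j. of_int j * Qf (1 + 1 * j) $ m)"
    by (rule PF_mult[OF PF_id sh])
  then have g: "PF (2 * m + 1) (\<lambda>j. - (of_int j * Qf (j + 1) $ m))"
    by (intro PF_uminus) (simp add: add.commute)
  have "PF (2 * m + 1 + 1) (\<lambda>j. Qf j $ Suc m)"
  proof (rule PF_antidiff[OF g])
    fix j
    show "Qf (j + 1) $ Suc m - Qf j $ Suc m = - (of_int j * Qf (j + 1) $ m)"
      using Qf_nth_rec[of j m] by (simp add: algebra_simps)
  qed
  then show ?case by simp
qed

lemma PF_Gp: "PF (2 * m) (\<lambda>j. Gp j $ m)"
proof -
  have "PF (2 * m) (\<lambda>j. \<Sum>i=0..m. Apow j $ i * Qf j $ (m - i))"
  proof (rule PF_sum)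
    fix i assume "i \<in> {0..m}"
    then have "2 * i + 2 * (m - i) = 2 * m" by simp
    then show "PF (2 * m) (\<lambda>j. Apow j $ i * Qf j $ (m - i))"
      using PF_mult[OF PF_Apow[of i] PF_Qf[of "m - i"]] by simp
  qed
  then show ?thesis by (simp add: Gp_def fps_mult_nth)
qed


lemma G_Gp: "G_fps j = Gp (int j)"
proof -
  have "G_fps j = Afps ^ j * (\<Prod>i\<in>{0..<j}. Linv (int i))"
    by (simp add: G_fps_def prod.distrib Linv_def Lfps_def)
  then show ?thesis by (simp add: Gp_def Apow_def Qf_def)
qed

lemma H_Gp:
  assumes "j > 0"
  shows "H_fps j = Gp (1 - int j)"
proof -
  have card: "nat (int j - 1) = j - 1" by simp
  have "H_fps j = (\<Prod>i\<in>{1 - int j..-1}. Lfps i) * Ainv ^ (j - 1)"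
    by (simp add: H_fps_def prod.distrib Lfps_def Ainv_def card)
  moreover have "Gp (1 - int j) = Ainv ^ (j - 1) * (\<Prod>i\<in>{1 - int j..-1}. Lfps i)"
  proof (cases "j = 1")
    case True then show ?thesis by (simp add: Gp_def Apow_def Qf_def)
  next
    case False
    then have "1 - int j < 0" "nat (- (1 - int j)) = j - 1" using assms by auto
    then show ?thesis by (simp add: Gp_def Apow_def Qf_def)
  qed
  ultimately show ?thesis by (simp add: mult.commute)
qed

definition cfun :: "nat \<Rightarrow> int \<Rightarrow> qpoly" where
  "cfun n j = (fps_shift 2 (Gp j - Gp (1 - j)) * Afps) $ (n - 1)"

lemma F_cfun: "j > 0 \<Longrightarrow> F_fps j $ (n - 1) = cfun n (int j)"
  by (simp add: F_fps_def cfun_def G_Gp H_Gp)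

lemma cfun_expand:
  "cfun n j = (\<Sum>i=0..n-1. (Gp j $ (i + 2) - Gp (1 - j) $ (i + 2)) * Afps $ (n - 1 - i))"
  by (simp add: cfun_def fps_mult_nth)

lemma cfun_antisym: "cfun n (1 - j) = - cfun n j"
proof -
  have "fps_shift 2 (Gp (1 - j) - Gp (1 - (1 - j))) = - fps_shift 2 (Gp j - Gp (1 - j))"
    by (rule fps_ext) simp
  then show ?thesis unfolding cfun_def by simp
qed

lemma PF_cfun:
  assumes n1: "n \<ge> 1"
  shows "PF (2 * n + 2) (cfun n)"
proof -
  have "PF (2 * n + 2) (\<lambda>j. \<Sum>i=0..n-1. (Gp j $ (i + 2) - Gp (1 - j) $ (i + 2)) * Afps $ (n - 1 - i))"
  proof (rule PF_sum)
    fix i assume i: "i \<in> {0..n-1}"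
    have a: "PF (2 * (i + 2)) (\<lambda>j. Gp j $ (i + 2))" by (rule PF_Gp)
    have b: "PF (2 * (i + 2)) (\<lambda>j. Gp (1 + (-1) * j) $ (i + 2))" by (rule PF_comp_lin[OF PF_Gp])
    have b2: "PF (2 * (i + 2)) (\<lambda>j. Gp (1 - j) $ (i + 2))" using b by simp
    have "PF (2 * (i + 2) + 0) (\<lambda>j. (Gp j $ (i + 2) - Gp (1 - j) $ (i + 2)) * Afps $ (n - 1 - i))"
      by (rule PF_mult[OF PF_diff[OF a b2] PF_const[of 0 "Afps $ (n - 1 - i)"]])
    then show "PF (2 * n + 2) (\<lambda>j. (Gp j $ (i + 2) - Gp (1 - j) $ (i + 2)) * Afps $ (n - 1 - i))"
      by (rule PF_mono) (use i n1 in auto)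
  qed
  then show ?thesis by (simp add: cfun_expand[abs_def])
qed


definition V :: "int \<Rightarrow> qpoly" where "V j = of_int (j * (j - 1))"
definition W :: "int \<Rightarrow> qpoly" where "W j = of_int (2 * j - 1)"

lemma WW: "W j * W j = poly [:1, 4:] (V j)"
proof -
  have "(2 * j - 1) * (2 * j - 1) = 1 + 4 * (j * (j - 1))" by algebra
  then have "(of_int ((2 * j - 1) * (2 * j - 1)) :: qpoly) = of_int (1 + 4 * (j * (j - 1)))" by simp
  then show ?thesis unfolding W_def V_def by (simp add: algebra_simps)
qed

lemma V_refl: "V (1 - j) = V j"
proof -
  have "(1 - j) * (1 - j - 1) = j * (j - 1)" by algebra
  then show ?thesis unfolding V_def by simp
qed

lemma W_refl: "W (1 - j) = - W j"
proof -
  have "2 * (1 - j) - 1 = - (2 * j - 1)" by algebra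
  then show ?thesis unfolding W_def by simp
qed

definition bnd :: "nat \<Rightarrow> nat \<Rightarrow> qpoly poly \<Rightarrow> bool" where
  "bnd e d P \<longleftrightarrow> (\<forall>i. coeff P i \<noteq> 0 \<longrightarrow> 2 * i + e \<le> d)"

lemma bnd_zero: "bnd e d 0" by (simp add: bnd_def)

lemma bnd_add: "bnd e d P \<Longrightarrow> bnd e d Q \<Longrightarrow> bnd e d (P + Q)"
  unfolding bnd_def
proof (intro allI impI)
  fix i assume a: "\<forall>i. coeff P i \<noteq> 0 \<longrightarrow> 2 * i + e \<le> d" "\<forall>i. coeff Q i \<noteq> 0 \<longrightarrow> 2 * i + e \<le> d"
    and "coeff (P + Q) i \<noteq> 0"
  then have "coeff P i \<noteq> 0 \<or> coeff Q i \<noteq> 0" by auto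
  then show "2 * i + e \<le> d" using a by blast
qed

lemma bnd_mono: "bnd e d P \<Longrightarrow> d \<le> d' \<Longrightarrow> bnd e d' P"
  unfolding bnd_def by (meson order_trans)

lemma bnd_smult: "bnd e d P \<Longrightarrow> bnd e d (smult c P)"
  unfolding bnd_def by simp

lemma bnd_const: "e \<le> d \<Longrightarrow> bnd e d [:c:]"
  unfolding bnd_def by (simp add: coeff_pCons split: nat.splits)

lemma bnd_mult:
  assumes "bnd e1 d1 P" "bnd e2 d2 Q"
  shows "bnd (e1 + e2) (d1 + d2) (P * Q)"
  unfolding bnd_def
proof (intro allI impI)
  fix n assume "coeff (P * Q) n \<noteq> 0"
  then have "(\<Sum>i\<le>n. coeff P i * coeff Q (n - i)) \<noteq> 0" by (simp add: coeff_mult)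
  then obtain i where i: "i \<le> n" "coeff P i * coeff Q (n - i) \<noteq> 0"
    by (meson atMost_iff sum.not_neutral_contains_not_neutral)
  then have "coeff P i \<noteq> 0" "coeff Q (n - i) \<noteq> 0" by auto
  then have "2 * i + e1 \<le> d1" "2 * (n - i) + e2 \<le> d2" using assms unfolding bnd_def by auto
  then show "2 * n + (e1 + e2) \<le> d1 + d2" using i(1) by linarith
qed

lemma bnd_lin:
  assumes "bnd 2 d R"
  shows "bnd 0 d ([:1, 4:] * R)"
proof -
  have e: "[:1, 4:] * R = R + pCons 0 (smult 4 R)" by (simp add: mult_pCons_left)
  show ?thesis unfolding e bnd_def
  proof (intro allI impI)
    fix i assume "coeff (R + pCons 0 (smult 4 R)) i \<noteq> 0"
    then have "coeff R i \<noteq> 0 \<or> (i > 0 \<and> coeff R (i - 1) \<noteq> 0)"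
      by (cases i) auto
    then show "2 * i + 0 \<le> d"
    proof
      assume "coeff R i \<noteq> 0"
      then have "2 * i + 2 \<le> d" using assms unfolding bnd_def by blast
      then show ?thesis by simp
    next
      assume "i > 0 \<and> coeff R (i - 1) \<noteq> 0"
      then have "2 * (i - 1) + 2 \<le> d" "i > 0" using assms unfolding bnd_def by blast+
      then show ?thesis by simp
    qed
  qed
qed

definition VWd :: "nat \<Rightarrow> (int \<Rightarrow> qpoly) \<Rightarrow> bool" where
  "VWd d f \<longleftrightarrow> (\<exists>P Q. bnd 0 d P \<and> bnd 1 d Q \<and> (\<forall>j. f j = poly P (V j) + W j * poly Q (V j)))"

lemma VWd_const: "VWd d (\<lambda>j. c)"
  unfolding VWd_def by (intro exI[of _ "[:c:]"] exI[of _ 0]) (simp add: bnd_const bnd_zero)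

lemma VWd_mono: "VWd d f \<Longrightarrow> d \<le> d' \<Longrightarrow> VWd d' f"
  unfolding VWd_def by (meson bnd_mono)

lemma VWd_add: "VWd d f \<Longrightarrow> VWd d g \<Longrightarrow> VWd d (\<lambda>j. f j + g j)"
  unfolding VWd_def
proof (elim exE conjE)
  fix P1 Q1 P2 Q2
  assume "bnd 0 d P1" "bnd 1 d Q1" "\<forall>j. f j = poly P1 (V j) + W j * poly Q1 (V j)"
    "bnd 0 d P2" "bnd 1 d Q2" "\<forall>j. g j = poly P2 (V j) + W j * poly Q2 (V j)"
  then show "\<exists>P Q. bnd 0 d P \<and> bnd 1 d Q \<and> (\<forall>j. f j + g j = poly P (V j) + W j * poly Q (V j))"
    by (intro exI[of _ "P1 + P2"] exI[of _ "Q1 + Q2"]) (simp add: bnd_add algebra_simps)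
qed

lemma VWd_smult: "VWd d f \<Longrightarrow> VWd d (\<lambda>j. c * f j)"
  unfolding VWd_def
proof (elim exE conjE)
  fix P1 Q1
  assume "bnd 0 d P1" "bnd 1 d Q1" "\<forall>j. f j = poly P1 (V j) + W j * poly Q1 (V j)"
  then show "\<exists>P Q. bnd 0 d P \<and> bnd 1 d Q \<and> (\<forall>j. c * f j = poly P (V j) + W j * poly Q (V j))"
    by (intro exI[of _ "smult c P1"] exI[of _ "smult c Q1"]) (simp add: bnd_smult algebra_simps)
qed

lemma VWd_mult: "VWd d1 f \<Longrightarrow> VWd d2 g \<Longrightarrow> VWd (d1 + d2) (\<lambda>j. f j * g j)"
  unfolding VWd_def
proof (elim exE conjE)
  fix P1 Q1 P2 Q2
  assume b: "bnd 0 d1 P1" "bnd 1 d1 Q1" "bnd 0 d2 P2" "bnd 1 d2 Q2"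
    and f: "\<forall>j. f j = poly P1 (V j) + W j * poly Q1 (V j)"
    and g: "\<forall>j. g j = poly P2 (V j) + W j * poly Q2 (V j)"
  let ?P = "P1 * P2 + [:1, 4:] * (Q1 * Q2)"
  let ?Q = "P1 * Q2 + Q1 * P2"
  have b2: "bnd 2 (d1 + d2) (Q1 * Q2)" using bnd_mult[OF b(2) b(4)] by (simp add: numeral_2_eq_2)
  have "bnd 0 (d1 + d2) ?P"
    using bnd_mult[OF b(1) b(3)] bnd_lin[OF b2] by (simp add: bnd_add)
  moreover have "bnd 1 (d1 + d2) ?Q"
    using bnd_mult[OF b(1) b(4)] bnd_mult[OF b(2) b(3)] by (simp add: bnd_add add.commute)
  moreover have "f j * g j = poly ?P (V j) + W j * poly ?Q (V j)" for j
  proof -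
    have "f j * g j = poly P1 (V j) * poly P2 (V j) + (W j * W j) * (poly Q1 (V j) * poly Q2 (V j))
        + W j * (poly P1 (V j) * poly Q2 (V j) + poly Q1 (V j) * poly P2 (V j))"
    proof -
      have "f j * g j = (poly P1 (V j) + W j * poly Q1 (V j)) * (poly P2 (V j) + W j * poly Q2 (V j))"
        using f g by simp
      then show ?thesis by algebra
    qed
    then show ?thesis unfolding WW by (simp only: poly_mult poly_add)
  qed
  ultimately show "\<exists>P Q. bnd 0 (d1 + d2) P \<and> bnd 1 (d1 + d2) Q \<and> (\<forall>j. f j * g j = poly P (V j) + W j * poly Q (V j))"
    by blast
qed

lemma VWd_id: "VWd 1 (\<lambda>j. of_int j)"
  unfolding VWd_def
proof (intro exI conjI allI)
  let ?h = "Poly_Mapping.single 0 (1/2) :: qpoly"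
  show "bnd 0 1 [:?h:]" "bnd 1 1 [:?h:]" by (simp_all add: bnd_const)
  fix j
  have h2: "?h * 2 = 1"
  proof -
    have "?h * 2 = ?h * Poly_Mapping.single 0 2" by simp
    also have "\<dots> = Poly_Mapping.single (0 + 0) (1/2 * 2)" by (rule mult_single)
    finally show ?thesis by simp
  qed
  have "poly [:?h:] (V j) + W j * poly [:?h:] (V j) = ?h * (1 + W j)" by (simp add: algebra_simps)
  also have "1 + W j = 2 * of_int j" by (simp add: W_def)
  also have "?h * (2 * of_int j) = of_int j" by (simp add: mult.assoc[symmetric] h2)
  finally show "of_int j = poly [:?h:] (V j) + W j * poly [:?h:] (V j)" by simp
qed

lemma VWd_sum: "(\<And>i. i \<in> I \<Longrightarrow> VWd d (f i)) \<Longrightarrow> VWd d (\<lambda>j. \<Sum>i\<in>I. f i j)"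
proof (induction I rule: infinite_finite_induct)
  case (infinite A) then show ?case by (simp add: VWd_const)
next
  case empty then show ?case by (simp add: VWd_const)
next
  case (insert x F)
  then show ?case by (simp add: VWd_add)
qed

lemma VWd_pow: "VWd k (\<lambda>j. of_int j ^ k)"
proof (induction k)
  case 0 then show ?case by (simp add: VWd_const)
next
  case (Suc k)
  then show ?case using VWd_mult[OF VWd_id Suc] by simp
qed

lemma PF_VWd:
  assumes "PF d f"
  shows "VWd d f"
proof -
  obtain p where p: "degree p \<le> d" "\<And>j. f j = poly p (of_int j)" using assms unfolding PF_def by blast
  have "VWd d (\<lambda>j. \<Sum>k\<le>degree p. coeff p k * of_int j ^ k)"
  proof (rule VWd_sum)
    fix k assume "k \<in> {..degree p}"
    then have "k \<le> d" using p(1) by simp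
    then show "VWd d (\<lambda>j. coeff p k * of_int j ^ k)"
      by (intro VWd_smult VWd_mono[OF VWd_pow])
  qed
  moreover have "f = (\<lambda>j. \<Sum>k\<le>degree p. coeff p k * of_int j ^ k)"
    by (rule ext) (simp add: p(2) poly_altdef)
  ultimately show ?thesis by simp
qed

lemma antisym_decomp:
  assumes "VWd d f" "\<And>j. f (1 - j) = - f j"
  shows "\<exists>Q. bnd 1 d Q \<and> (\<forall>j. f j = W j * poly Q (V j))"
proof -
  obtain P Q where PQ: "bnd 1 d Q" "\<And>j. f j = poly P (V j) + W j * poly Q (V j)"
    using assms(1) unfolding VWd_def by blast
  have "f j = W j * poly Q (V j)" for j
  proof -
    define p where "p = poly P (V j)"
    define q where "q = W j * poly Q (V j)"
    have e1: "f (1 - j) = p - q" using PQ(2)[of "1 - j"] by (simp add: V_refl W_refl p_def q_def)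
    have e2: "f (1 - j) = - (p + q)" using assms(2)[of j] PQ(2)[of j] by (simp add: p_def q_def)
    have "p + p = (p - q) - (- (p + q))" by (simp add: algebra_simps)
    also have "\<dots> = 0" using e1 e2 by simp
    finally have "2 * p = 0" by (simp only: mult_2)
    then have "p = 0" by simp
    then show ?thesis using PQ(2)[of j] by (simp add: p_def)
  qed
  then show ?thesis using PQ(1) by blast
qed


definition wt :: "mono \<Rightarrow> nat" where
  "wt \<mu> = (\<Sum>k\<in>Poly_Mapping.keys \<mu>. (k + 2) * Poly_Mapping.lookup \<mu> k)"

lemma wt_superset:
  assumes "finite K" "Poly_Mapping.keys \<mu> \<subseteq> K"
  shows "wt \<mu> = (\<Sum>k\<in>K. (k + 2) * Poly_Mapping.lookup \<mu> k)"
  unfolding wt_def by (rule sum.mono_neutral_left) (use assms in \<open>auto simp: in_keys_iff\<close>)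

lemma wt_add: "wt (a + b) = wt a + wt b"
proof -
  let ?K = "Poly_Mapping.keys a \<union> Poly_Mapping.keys b"
  have "wt (a + b) = (\<Sum>k\<in>?K. (k + 2) * Poly_Mapping.lookup (a + b) k)"
    by (rule wt_superset) (auto simp: keys_add[of a b])
  also have "\<dots> = (\<Sum>k\<in>?K. (k + 2) * Poly_Mapping.lookup a k) + (\<Sum>k\<in>?K. (k + 2) * Poly_Mapping.lookup b k)"
    by (simp add: lookup_add distrib_left sum.distrib)
  also have "\<dots> = wt a + wt b"
    by (subst (1 2) wt_superset[of ?K]) auto
  finally show ?thesis .
qed

lemma wt_single: "wt (Poly_Mapping.single i (1::nat)) = i + 2"
  by (simp add: wt_def)

lemma wt_ge: "k \<in> Poly_Mapping.keys \<mu> \<Longrightarrow> (k + 2) * Poly_Mapping.lookup \<mu> k \<le> wt \<mu>"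
  unfolding wt_def by (rule member_le_sum) auto

lemma wt_unique:
  assumes w: "wt \<mu> \<le> n + 1" and ne: "\<mu> \<noteq> Poly_Mapping.single (n - 1) 1" and n: "n \<ge> 1"
  shows "Poly_Mapping.keys \<mu> \<subseteq> {..<n - 1}"
proof
  fix k assume k: "k \<in> Poly_Mapping.keys \<mu>"
  show "k \<in> {..<n - 1}"
  proof (rule ccontr)
    assume "k \<notin> {..<n - 1}"
    then have kn: "k \<ge> n - 1" by simp
    have l1: "Poly_Mapping.lookup \<mu> k \<ge> 1" using k by (simp add: in_keys_iff)
    have "(k + 2) * Poly_Mapping.lookup \<mu> k \<le> n + 1" using wt_ge[OF k] w by linarith
    moreover have a: "k + 2 \<le> (k + 2) * Poly_Mapping.lookup \<mu> k" using mult_le_mono2[OF l1, of "k + 2"] by simp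
    ultimately have kk: "k = n - 1" using kn n by linarith
    have "(k + 2) * Poly_Mapping.lookup \<mu> k \<le> (k + 2) * 1"
      using \<open>(k + 2) * Poly_Mapping.lookup \<mu> k \<le> n + 1\<close> kk n by simp
    then have "Poly_Mapping.lookup \<mu> k \<le> 1" by (simp only: mult_le_cancel1)
    then have l: "Poly_Mapping.lookup \<mu> k = 1" using l1 by simp
    have others: "Poly_Mapping.keys \<mu> = {k}"
    proof (rule ccontr)
      assume "Poly_Mapping.keys \<mu> \<noteq> {k}"
      then obtain k' where k': "k' \<in> Poly_Mapping.keys \<mu>" "k' \<noteq> k" using k by blast
      have "wt \<mu> = (k + 2) * Poly_Mapping.lookup \<mu> k + (\<Sum>x\<in>Poly_Mapping.keys \<mu> - {k}. (x + 2) * Poly_Mapping.lookup \<mu> x)"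
        unfolding wt_def using k by (simp add: sum.remove)
      moreover have "(k' + 2) * Poly_Mapping.lookup \<mu> k' \<le> (\<Sum>x\<in>Poly_Mapping.keys \<mu> - {k}. (x + 2) * Poly_Mapping.lookup \<mu> x)"
        by (rule member_le_sum) (use k' in auto)
      moreover have "(k' + 2) * Poly_Mapping.lookup \<mu> k' \<ge> 2"
      proof -
        have "Poly_Mapping.lookup \<mu> k' \<ge> 1" using k'(1) by (simp add: in_keys_iff)
        then have "(k' + 2) * 1 \<le> (k' + 2) * Poly_Mapping.lookup \<mu> k'" by (rule mult_le_mono2)
        then show ?thesis by simp
      qed
      ultimately have "wt \<mu> \<ge> k + 4" using l by simp
      then show False using w kk n by linarith
    qed
    have "\<mu> = Poly_Mapping.single (n - 1) 1"
    proof (rule poly_mapping_eqI)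
      fix x
      show "Poly_Mapping.lookup \<mu> x = Poly_Mapping.lookup (Poly_Mapping.single (n - 1) 1) x"
      proof (cases "x = k")
        case True then show ?thesis using l kk by simp
      next
        case False
        then have "x \<notin> Poly_Mapping.keys \<mu>" using others by auto
        then show ?thesis using False kk by (simp add: in_keys_iff lookup_single_not_eq)
      qed
    qed
    then show False using ne by simp
  qed
qed


definition wtb :: "qpoly \<Rightarrow> nat \<Rightarrow> bool" where
  "wtb p m \<longleftrightarrow> (\<forall>\<mu>\<in>Poly_Mapping.keys p. wt \<mu> \<le> m)"

lemma wtb_mono: "wtb p m \<Longrightarrow> m \<le> m' \<Longrightarrow> wtb p m'"
  unfolding wtb_def by auto

lemma wtb_zero: "wtb 0 m" by (simp add: wtb_def)

lemma wtb_keys0: "Poly_Mapping.keys p \<subseteq> {0} \<Longrightarrow> wtb p m"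
  unfolding wtb_def by (auto simp: wt_def)

lemma wtb_add: "wtb p m \<Longrightarrow> wtb q m \<Longrightarrow> wtb (p + q) m"
  unfolding wtb_def using keys_add[of p q] by blast

lemma wtb_uminus: "wtb p m \<Longrightarrow> wtb (- p) m"
  unfolding wtb_def by simp

lemma wtb_diff: "wtb p m \<Longrightarrow> wtb q m \<Longrightarrow> wtb (p - q) m"
  unfolding wtb_def using keys_diff[of p q] by blast

lemma wtb_mult: "wtb p m1 \<Longrightarrow> wtb q m2 \<Longrightarrow> wtb (p * q) (m1 + m2)"
  unfolding wtb_def
proof
  fix \<mu> assume a: "\<forall>\<mu>\<in>Poly_Mapping.keys p. wt \<mu> \<le> m1" "\<forall>\<mu>\<in>Poly_Mapping.keys q. wt \<mu> \<le> m2"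
    and "\<mu> \<in> Poly_Mapping.keys (p * q)"
  then obtain x y where "\<mu> = x + y" "x \<in> Poly_Mapping.keys p" "y \<in> Poly_Mapping.keys q"
    using keys_mult[of p q] by blast
  then show "wt \<mu> \<le> m1 + m2" using a by (simp add: wt_add add_mono)
qed

lemma wtb_sum: "(\<And>i. i \<in> I \<Longrightarrow> wtb (f i) m) \<Longrightarrow> wtb (\<Sum>i\<in>I. f i) m"
  by (induction I rule: infinite_finite_induct) (simp_all add: wtb_zero wtb_add)

lemma wtb_lookup0: "wtb p m \<Longrightarrow> m < wt \<mu> \<Longrightarrow> Poly_Mapping.lookup p \<mu> = 0"
  unfolding wtb_def by (meson in_keys_iff not_le)

definition Wt :: "qpoly fps \<Rightarrow> bool" where "Wt f \<longleftrightarrow> (\<forall>m. wtb (f $ m) m)"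

lemma Wt_add: "Wt f \<Longrightarrow> Wt g \<Longrightarrow> Wt (f + g)"
  unfolding Wt_def by (simp add: wtb_add)

lemma Wt_diff: "Wt f \<Longrightarrow> Wt g \<Longrightarrow> Wt (f - g)"
  unfolding Wt_def by (simp add: wtb_diff)

lemma Wt_mult: "Wt f \<Longrightarrow> Wt g \<Longrightarrow> Wt (f * g)"
  unfolding Wt_def
proof
  fix m assume a: "\<forall>m. wtb (f $ m) m" "\<forall>m. wtb (g $ m) m"
  have "wtb (\<Sum>i=0..m. f $ i * g $ (m - i)) m"
  proof (rule wtb_sum)
    fix i assume "i \<in> {0..m}"
    then have "wtb (f $ i * g $ (m - i)) (i + (m - i))" using a by (intro wtb_mult) auto
    then show "wtb (f $ i * g $ (m - i)) m" using \<open>i \<in> {0..m}\<close> by simp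
  qed
  then show "wtb ((f * g) $ m) m" by (simp add: fps_mult_nth)
qed

lemma Wt_one: "Wt 1"
  unfolding Wt_def by (auto intro: wtb_keys0 simp: fps_one_nth)

lemma Wt_power: "Wt f \<Longrightarrow> Wt (f ^ k)"
  by (induction k) (simp_all add: Wt_one Wt_mult)

lemma Wt_prod: "(\<And>i. i \<in> I \<Longrightarrow> Wt (f i)) \<Longrightarrow> Wt (\<Prod>i\<in>I. f i)"
  by (induction I rule: infinite_finite_induct) (simp_all add: Wt_one Wt_mult)

lemma Wt_inv:
  assumes W: "Wt f"
  shows "Wt (fps_right_inverse f 1)"
  unfolding Wt_def
proof
  fix m
  show "wtb (fps_right_inverse f 1 $ m) m"
  proof (induction m rule: less_induct)
    case (less m)
    show ?case
    proof (cases m)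
      case 0 then show ?thesis by (simp add: wtb_keys0)
    next
      case (Suc k)
      have "wtb (\<Sum>i=1..m. f $ i * fps_right_inverse_constructor f 1 (m - i)) m"
      proof (rule wtb_sum)
        fix i assume i: "i \<in> {1..m}"
        then have "wtb (f $ i * fps_right_inverse_constructor f 1 (m - i)) (i + (m - i))"
          using W less[of "m - i"] unfolding Wt_def by (intro wtb_mult) auto
        then show "wtb (f $ i * fps_right_inverse_constructor f 1 (m - i)) m" using i by simp
      qed
      moreover have "fps_right_inverse f 1 $ m = - (\<Sum>i=1..m. f $ i * fps_right_inverse_constructor f 1 (m - i))"
        unfolding Suc by (simp only: fps_nth_Abs_fps fps_right_inverse_constructor.simps mult_minus_left mult_1_left)
      ultimately show ?thesis by (simp only: wtb_uminus)
    qed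
  qed
qed

lemma keys_of_int: "Poly_Mapping.keys (of_int i :: qpoly) \<subseteq> {0}"
  by (auto simp: in_keys_iff lookup_of_int when_def split: if_splits)

lemma keys_one: "Poly_Mapping.keys (1 :: qpoly) \<subseteq> {0}"
  by simp

lemma Var_nth: "Afps $ m = (if m = 0 then 1 else 0) + (if m < 2 then 0 else Var (m - 2))"
  by (simp add: fps_X_power_mult_right_nth fps_one_nth)

lemma Wt_Afps: "Wt Afps"
  unfolding Wt_def
proof
  fix m
  have "wtb (Var (m - 2)) m" if "\<not> m < 2"
    using that by (auto simp: wtb_def Var_def wt_def)
  then show "wtb (Afps $ m) m"
    unfolding Var_nth by (intro wtb_add) (auto intro: wtb_keys0 wtb_zero)
qed

lemma Lfps_nth: "Lfps i $ m = (if m = 0 then 1 else 0) + (if m = 1 then of_int i else 0)"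
  by (simp add: Lfps_def fps_one_nth fps_of_int[symmetric])

lemma Wt_Lfps: "Wt (Lfps i)"
  unfolding Wt_def Lfps_nth
  by (intro allI wtb_add) (auto intro: wtb_keys0 wtb_keys0[OF keys_of_int])

lemma Wt_Apow: "Wt (Apow j)"
  unfolding Apow_def Ainv_def by (auto intro!: Wt_power Wt_inv Wt_Afps)

lemma Wt_Qf: "Wt (Qf j)"
  unfolding Qf_def Linv_def by (auto intro!: Wt_prod Wt_inv Wt_Lfps)

lemma Wt_Gp: "Wt (Gp j)"
  unfolding Gp_def by (intro Wt_mult Wt_Apow Wt_Qf)


definition lin :: "nat \<Rightarrow> qpoly fps \<Rightarrow> rat" where
  "lin i f = Poly_Mapping.lookup (f $ (i + 2)) (Poly_Mapping.single i 1)"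
definition c0 :: "qpoly fps \<Rightarrow> rat" where "c0 f = Poly_Mapping.lookup (f $ 0) 0"

lemma sum_single_nz:
  assumes "finite A" "a \<in> A" "\<And>k. k \<in> A \<Longrightarrow> k \<noteq> a \<Longrightarrow> F k = 0"
  shows "sum F A = F a"
proof -
  have "sum F A = F a + sum F (A - {a})" using assms by (simp add: sum.remove)
  also have "sum F (A - {a}) = 0" using assms by (intro sum.neutral) auto
  finally show ?thesis by simp
qed

lemma lin_mult:
  assumes f: "Wt f" and g: "Wt g"
  shows "lin i (f * g) = lin i f * c0 g + c0 f * lin i g"
proof -
  define \<mu> where "\<mu> = (Poly_Mapping.single i 1 :: mono)"
  have w\<mu>: "wt \<mu> = i + 2" by (simp add: \<mu>_def wt_def)
  let ?M = "i + 2"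
  have "lin i (f * g) = (\<Sum>k=0..?M. Poly_Mapping.lookup (f $ k * g $ (?M - k)) \<mu>)"
    unfolding lin_def \<mu>_def by (simp only: fps_mult_nth lookup_sum)
  also have "\<dots> = (\<Sum>k=0..?M. Poly_Mapping.lookup (f $ k) \<mu> * Poly_Mapping.lookup (g $ (?M - k)) 0)
      + (\<Sum>k=0..?M. Poly_Mapping.lookup (f $ k) 0 * Poly_Mapping.lookup (g $ (?M - k)) \<mu>)"
    unfolding \<mu>_def by (simp only: lookup_mult_single1 sum.distrib)
  also have "(\<Sum>k=0..?M. Poly_Mapping.lookup (f $ k) \<mu> * Poly_Mapping.lookup (g $ (?M - k)) 0)
      = Poly_Mapping.lookup (f $ ?M) \<mu> * Poly_Mapping.lookup (g $ 0) 0"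
  proof (subst sum_single_nz[where a = ?M])
    fix k assume "k \<in> {0..?M}" "k \<noteq> ?M"
    then have "k < wt \<mu>" using w\<mu> by simp
    then have "Poly_Mapping.lookup (f $ k) \<mu> = 0" using f unfolding Wt_def by (intro wtb_lookup0) auto
    then show "Poly_Mapping.lookup (f $ k) \<mu> * Poly_Mapping.lookup (g $ (?M - k)) 0 = 0" by simp
  qed auto
  also have "(\<Sum>k=0..?M. Poly_Mapping.lookup (f $ k) 0 * Poly_Mapping.lookup (g $ (?M - k)) \<mu>)
      = Poly_Mapping.lookup (f $ 0) 0 * Poly_Mapping.lookup (g $ ?M) \<mu>"
  proof (subst sum_single_nz[where a = 0])
    fix k assume "k \<in> {0..?M}" "k \<noteq> 0"
    then have "?M - k < wt \<mu>" using w\<mu> by simp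
    then have "Poly_Mapping.lookup (g $ (?M - k)) \<mu> = 0" using g unfolding Wt_def by (intro wtb_lookup0) auto
    then show "Poly_Mapping.lookup (f $ k) 0 * Poly_Mapping.lookup (g $ (?M - k)) \<mu> = 0" by simp
  qed auto
  finally show ?thesis by (simp add: lin_def c0_def \<mu>_def)
qed

lemma lin_one: "lin i 1 = 0" by (simp add: lin_def fps_one_nth)

lemma c0_Afps: "c0 Afps = 1" by (simp add: c0_def)
lemma lin_Afps: "lin i Afps = 1" unfolding lin_def Var_nth by (simp add: Var_def)
lemma c0_Apow: "c0 (Apow j) = 1" by (simp add: c0_def Apow_nth0)
lemma c0_Qf: "c0 (Qf j) = 1" by (simp add: c0_def Qf_nth0)
lemma c0_Lfps: "c0 (Lfps j) = 1" by (simp add: c0_def Lfps_nth0)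
lemma lin_Lfps: "lin i (Lfps j) = 0" by (simp add: lin_def Lfps_nth)

lemma lin_Apow: "lin i (Apow j) = of_int j"
proof -
  define h where "h j = lin i (Apow j) - of_int j" for j
  have "h (j + 1) = h j" for j
    by (simp add: h_def Apow_succ lin_mult Wt_Apow Wt_Afps c0_Afps lin_Afps c0_Apow)
  then have "h j = h 0" by (rule PF_const_step)
  then show ?thesis by (simp add: h_def Apow_0 lin_one)
qed

lemma lin_Qf: "lin i (Qf j) = 0"
proof -
  define h where "h j = lin i (Qf j)" for j
  have "h j = h (j + 1)" for j
    unfolding h_def by (subst Qf_rec) (simp add: lin_mult Wt_Qf Wt_Lfps c0_Lfps lin_Lfps c0_Qf)
  then have "h j = h 0" by (intro PF_const_step) simp
  then show ?thesis by (simp add: h_def Qf_0 lin_one)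
qed

lemma lin_Gp: "lin i (Gp j) = of_int j"
  by (simp add: Gp_def lin_mult Wt_Apow Wt_Qf lin_Apow lin_Qf c0_Apow c0_Qf)

lemma wtb_D: "wtb (Gp j $ m - Gp (1 - j) $ m) m"
  using Wt_Gp[of j] Wt_Gp[of "1 - j"] unfolding Wt_def by (intro wtb_diff) auto

lemma wtb_Afps: "wtb (Afps $ m) m" using Wt_Afps unfolding Wt_def by auto

lemma cfun_wtb:
  assumes n: "n \<ge> 1"
  shows "wtb (cfun n j) (n + 1)"
  unfolding cfun_expand
proof (rule wtb_sum)
  fix i assume i: "i \<in> {0..n - 1}"
  have "wtb ((Gp j $ (i + 2) - Gp (1 - j) $ (i + 2)) * Afps $ (n - 1 - i)) ((i + 2) + (n - 1 - i))"
    by (intro wtb_mult wtb_D wtb_Afps)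
  then show "wtb ((Gp j $ (i + 2) - Gp (1 - j) $ (i + 2)) * Afps $ (n - 1 - i)) (n + 1)"
    using i n by simp
qed

lemma cfun_lin:
  assumes n: "n \<ge> 3"
  shows "Poly_Mapping.lookup (cfun n j) (Poly_Mapping.single (n - 1) 1) = of_int (2 * j - 1)"
proof -
  define \<mu> where "\<mu> = (Poly_Mapping.single (n - 1) 1 :: mono)"
  have w\<mu>: "wt \<mu> = n + 1" using n by (simp add: \<mu>_def wt_def)
  define D where "D i = Gp j $ (i + 2) - Gp (1 - j) $ (i + 2)" for i
  have "Poly_Mapping.lookup (cfun n j) \<mu> = (\<Sum>i=0..n-1. Poly_Mapping.lookup (D i * Afps $ (n - 1 - i)) \<mu>)"
    by (simp add: cfun_expand lookup_sum D_def)
  also have "\<dots> = (\<Sum>i=0..n-1. Poly_Mapping.lookup (D i) \<mu> * Poly_Mapping.lookup (Afps $ (n - 1 - i)) 0)"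
  proof (rule sum.cong)
    fix i assume i: "i \<in> {0..n-1}"
    have "Poly_Mapping.lookup (Afps $ (n - 1 - i)) \<mu> = 0"
      by (rule wtb_lookup0[OF wtb_Afps]) (use w\<mu> in simp)
    then show "Poly_Mapping.lookup (D i * Afps $ (n - 1 - i)) \<mu> = Poly_Mapping.lookup (D i) \<mu> * Poly_Mapping.lookup (Afps $ (n - 1 - i)) 0"
      unfolding \<mu>_def by (simp only: lookup_mult_single1 mult_zero_right add_0_right)
  qed simp
  also have "\<dots> = Poly_Mapping.lookup (D (n - 1)) \<mu> * Poly_Mapping.lookup (Afps $ (n - 1 - (n - 1))) 0"
  proof (rule sum_single_nz)
    fix i assume i: "i \<in> {0..n-1}" "i \<noteq> n - 1"
    have "Poly_Mapping.lookup (D i) \<mu> = 0"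
      unfolding D_def by (rule wtb_lookup0[OF wtb_D]) (use w\<mu> i n in simp)
    then show "Poly_Mapping.lookup (D i) \<mu> * Poly_Mapping.lookup (Afps $ (n - 1 - i)) 0 = 0" by simp
  qed auto
  also have "\<dots> = lin (n - 1) (Gp j) - lin (n - 1) (Gp (1 - j))"
    using n by (simp add: D_def lin_def \<mu>_def lookup_minus)
  also have "\<dots> = of_int (2 * j - 1)" by (simp add: lin_Gp)
  finally show ?thesis by (simp add: \<mu>_def)
qed

lemma lookup_of_int_mult: "Poly_Mapping.lookup ((of_int k :: qpoly) * p) m = of_int k * Poly_Mapping.lookup p m"
proof -
  have "Poly_Mapping.lookup (Poly_Mapping.single 0 (of_int k) * p) m = of_int k * Poly_Mapping.lookup p m"
    by (rule lookup_single0_mult)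
  then show ?thesis by (simp only: single_of_int)
qed

lemma cfun_keys:
  assumes n: "n \<ge> 3" and \<mu>: "\<mu> \<in> Poly_Mapping.keys (cfun n j - W j * Var (n - 1))"
  shows "Poly_Mapping.keys \<mu> \<subseteq> {..<n - 1}"
proof -
  define \<mu>0 where "\<mu>0 = (Poly_Mapping.single (n - 1) 1 :: mono)"
  have lk: "Poly_Mapping.lookup (cfun n j - W j * Var (n - 1)) \<nu> =
      Poly_Mapping.lookup (cfun n j) \<nu> - of_int (2 * j - 1) * Poly_Mapping.lookup (Var (n - 1)) \<nu>" for \<nu>
    unfolding W_def by (simp only: lookup_minus lookup_of_int_mult)
  have ne: "\<mu> \<noteq> \<mu>0"
  proof
    assume "\<mu> = \<mu>0"
    then have "Poly_Mapping.lookup (cfun n j - W j * Var (n - 1)) \<mu> = 0"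
      using lk[of \<mu>] cfun_lin[OF n, of j] by (simp add: \<mu>0_def Var_def)
    then show False using \<mu> by (simp add: in_keys_iff)
  qed
  then have "Poly_Mapping.lookup (Var (n - 1)) \<mu> = 0"
    by (simp add: Var_def \<mu>0_def lookup_single_not_eq)
  then have "Poly_Mapping.lookup (cfun n j) \<mu> \<noteq> 0" using \<mu> lk[of \<mu>] by (simp add: in_keys_iff)
  then have "wt \<mu> \<le> n + 1" using cfun_wtb[of n j] n unfolding wtb_def by (simp add: in_keys_iff)
  then show ?thesis using wt_unique ne n unfolding \<mu>0_def by simp
qed


definition proj :: "nat set \<Rightarrow> qpoly \<Rightarrow> qpoly" where
  "proj X p = Abs_poly_mapping (\<lambda>\<mu>. if Poly_Mapping.keys \<mu> \<subseteq> X then Poly_Mapping.lookup p \<mu> else 0)"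

lemma lookup_proj: "Poly_Mapping.lookup (proj X p) \<mu> = (if Poly_Mapping.keys \<mu> \<subseteq> X then Poly_Mapping.lookup p \<mu> else 0)"
proof -
  have "finite {\<mu>. (if Poly_Mapping.keys \<mu> \<subseteq> X then Poly_Mapping.lookup p \<mu> else 0) \<noteq> 0}"
    by (rule finite_subset[of _ "Poly_Mapping.keys p"]) (auto simp: in_keys_iff)
  then show ?thesis unfolding proj_def by simp
qed

lemma proj_add: "proj X (p + q) = proj X p + proj X q"
  by (rule poly_mapping_eqI) (simp add: lookup_proj lookup_add)

lemma proj_zero: "proj X 0 = 0"
  by (rule poly_mapping_eqI) (simp add: lookup_proj)

lemma proj_sum: "proj X (\<Sum>i\<in>I. f i) = (\<Sum>i\<in>I. proj X (f i))"
  by (induction I rule: infinite_finite_induct) (simp_all add: proj_zero proj_add)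

lemma proj_of_nat: "proj X (p * of_nat k) = proj X p * of_nat k"
  by (rule poly_mapping_eqI) (simp add: lookup_proj lookup_mult_of_nat)

lemma proj_id: "(\<And>\<mu>. \<mu> \<in> Poly_Mapping.keys p \<Longrightarrow> Poly_Mapping.keys \<mu> \<subseteq> X) \<Longrightarrow> proj X p = p"
  by (rule poly_mapping_eqI) (auto simp: lookup_proj in_keys_iff)

lemma vars_proj: "vars (proj X p) \<subseteq> X"
  unfolding vars_def
proof (clarify)
  fix x \<mu> assume "\<mu> \<in> Poly_Mapping.keys (proj X p)" "x \<in> Poly_Mapping.keys \<mu>"
  then show "x \<in> X" by (auto simp: in_keys_iff lookup_proj split: if_splits)
qed

lemma cfun_decomp:
  assumes n: "n \<ge> 1"
  shows "\<exists>Q. bnd 1 (2 * n + 2) Q \<and> (\<forall>j. cfun n j = W j * poly Q (V j))"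
  by (rule antisym_decomp[OF PF_VWd[OF PF_cfun[OF n]] cfun_antisym])

lemma S_prop_exists:
  assumes n: "n \<ge> 3"
  shows "\<exists>T. S_prop n T"
proof -
  obtain Q where Qb: "bnd 1 (2 * n + 2) Q" and Qc: "\<And>j. cfun n j = W j * poly Q (V j)"
    using cfun_decomp[of n] n by auto
  have cQ: "coeff Q i = 0" if "i > n" for i
  proof (rule ccontr)
    assume "coeff Q i \<noteq> 0"
    then have "2 * i + 1 \<le> 2 * n + 2" using Qb unfolding bnd_def by blast
    then show False using that by linarith
  qed
  have polyQ: "poly Q x = (\<Sum>i\<le>n. coeff Q i * x ^ i)" for x
  proof -
    have "degree Q \<le> n" using cQ by (intro degree_le) auto
    then show ?thesis unfolding poly_altdef
      by (intro sum.mono_neutral_left) (auto simp: coeff_eq_0)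
  qed
  let ?X = "{..<n - 1}"
  define Q' where "Q' i = coeff Q i - (if i = 0 then Var (n - 1) else 0)" for i
  define T where "T i = (if i \<le> n then proj ?X (Q' i) else 0)" for i
  have T1: "\<forall>i>n. T i = 0" by (simp add: T_def)
  have T2: "\<forall>i\<le>n. vars (T i) \<subseteq> ?X" by (simp add: T_def vars_proj)
  have T3: "fps_nth (F_fps j) (n - 1) =
          of_nat (2 * j - 1) * (Var (n - 1) + T 0 + (\<Sum>i = 1..n. T i * of_nat (j * (j - 1)) ^ i))"
    if j: "j > 0" for j :: nat
  proof -
    define w :: qpoly where "w = of_nat (2 * j - 1)"
    define v :: qpoly where "v = of_nat (j * (j - 1))"
    have Wj: "W (int j) = w" unfolding W_def w_def using j by (simp add: of_nat_diff)
    have Vj: "V (int j) = v" unfolding V_def v_def using j by (simp add: of_nat_diff)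
    have F: "fps_nth (F_fps j) (n - 1) = cfun n (int j)" using j by (rule F_cfun)
    define X where "X = cfun n (int j) - W (int j) * Var (n - 1)"
    have Xe: "X = (\<Sum>i\<le>n. Q' i * of_nat ((2 * j - 1) * (j * (j - 1)) ^ i))"
    proof -
      have "X = w * ((\<Sum>i\<le>n. coeff Q i * v ^ i) - Var (n - 1))"
        unfolding X_def Qc Wj Vj polyQ by (simp only: right_diff_distrib)
      also have "(\<Sum>i\<le>n. coeff Q i * v ^ i) - Var (n - 1) = (\<Sum>i\<le>n. Q' i * v ^ i)"
      proof -
        have "(\<Sum>i\<le>n. (if i = 0 then Var (n - 1) else 0) * v ^ i) = Var (n - 1)"
          by (subst sum_single_nz[where a = 0]) auto
        then show ?thesis by (simp only: Q'_def left_diff_distrib sum_subtractf)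
      qed
      also have "w * (\<Sum>i\<le>n. Q' i * v ^ i) = (\<Sum>i\<le>n. Q' i * of_nat ((2 * j - 1) * (j * (j - 1)) ^ i))"
        unfolding sum_distrib_left w_def v_def
        by (rule sum.cong) (simp_all only: of_nat_mult of_nat_power ac_simps)
      finally show ?thesis .
    qed
    have "proj ?X X = X"
      by (rule proj_id) (use cfun_keys n in \<open>auto simp: X_def\<close>)
    then have "X = proj ?X X" by simp
    also have "\<dots> = (\<Sum>i\<le>n. proj ?X (Q' i) * of_nat ((2 * j - 1) * (j * (j - 1)) ^ i))"
      by (simp only: Xe proj_sum proj_of_nat)
    also have "\<dots> = (\<Sum>i\<le>n. T i * of_nat ((2 * j - 1) * (j * (j - 1)) ^ i))"
      by (rule sum.cong) (simp_all add: T_def)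
    also have "\<dots> = w * (\<Sum>i\<le>n. T i * v ^ i)"
      unfolding sum_distrib_left w_def v_def
      by (rule sum.cong) (simp_all only: of_nat_mult of_nat_power ac_simps)
    also have "(\<Sum>i\<le>n. T i * v ^ i) = T 0 + (\<Sum>i = 1..n. T i * v ^ i)"
      by (simp add: atMost_atLeast0 sum.atLeast_Suc_atMost[of 0 n, simplified])
    finally have "X = w * (T 0 + (\<Sum>i = 1..n. T i * v ^ i))" .
    moreover have "cfun n (int j) = X + w * Var (n - 1)" by (simp add: X_def Wj)
    ultimately have "cfun n (int j) = w * (Var (n - 1) + T 0 + (\<Sum>i = 1..n. T i * v ^ i))"
      by (simp only: distrib_left ac_simps)
    then show ?thesis unfolding F w_def v_def .
  qed
  have "S_prop n T" unfolding S_prop_def using T1 T2 T3 by blast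
  then show ?thesis by blast
qed

lemma S_prop_ex1: "n \<ge> 3 \<Longrightarrow> \<exists>!T. S_prop n T"
  using S_prop_exists S_prop_unique by blast



theorem proposition4p2:
  fixes \<phi> :: "rat \<Rightarrow> 'a::comm_ring_1" and c :: "nat \<Rightarrow> 'a" and n :: nat
  assumes hom1: "\<phi> 1 = 1"
    and hom_add: "\<And>x y. \<phi> (x + y) = \<phi> x + \<phi> y"
    and hom_mult: "\<And>x y. \<phi> (x * y) = \<phi> x * \<phi> y"
    and n: "n \<ge> 3"
  shows "eval_shift \<phi> c (S n 0) = (\<Sum>i1 = 1..n - 2. c i1 * c (n - 1 - i1))"
  by (rule final_from_unique[OF hom1 hom_add n S_prop_ex1[OF n]])

end
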